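(* Let $(K,D,v)$ be a VD-field such that $(K,v)$ is spherically complete, and assume that the map $D$ induced on the residue field $Kv$ is surjective. Then $D$ is surjective on $K$.
   Context: A VD-field is a valued field $(K,v)$ (valuation ring $\mathcal{O}$, residue field $Kv$, value group $vK$) with an additive map $D:K\to K$ such that: $vDa\ge va$ for all $a\in K$; $vK=\{va\mid a\in K,\ vDa>va\}$; there is $e\in\mathcal{O}$ with $D(ab)=aDb+bDa+e(Da)(Db)$ for all $a,b\in K$. The induced map on $Kv$ is $D(av)=(Da)v$ for $a\in\mathcal{O}$. $(K,v)$ is spherically complete if in the ultrametric space $u(a,b)=v(a-b)$ every nest (family totally ordered by inclusion) of balls has non-empty intersection. *)

theory Defs
  imports Main
begin

text \<open>The value of 0 is infinity; we model this by only constraining v on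
nonzero elements and using the comparison predicates below, which treat
v 0 as +infinity.\<close>

definition valuation :: "('a::field \<Rightarrow> 'g::linordered_ab_group_add) \<Rightarrow> bool" where
  "valuation v \<longleftrightarrow>
     (\<forall>a b. a \<noteq> 0 \<longrightarrow> b \<noteq> 0 \<longrightarrow> v (a * b) = v a + v b) \<and>
     (\<forall>a b. a \<noteq> 0 \<longrightarrow> b \<noteq> 0 \<longrightarrow> a + b \<noteq> 0 \<longrightarrow> min (v a) (v b) \<le> v (a + b))"

definition val_ge :: "('a::field \<Rightarrow> 'g::linorder) \<Rightarrow> 'a \<Rightarrow> 'a \<Rightarrow> bool" where
  "val_ge v a b \<longleftrightarrow> a = 0 \<or> (b \<noteq> 0 \<and> v b \<le> v a)"

definition val_gt :: "('a::field \<Rightarrow> 'g::linorder) \<Rightarrow> 'a \<Rightarrow> 'a \<Rightarrow> bool" where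
  "val_gt v a b \<longleftrightarrow> b \<noteq> 0 \<and> (a = 0 \<or> v b < v a)"

definition val_ring :: "('a::field \<Rightarrow> 'g::linorder) \<Rightarrow> 'a set" where
  "val_ring v = {a. val_ge v a 1}"

text \<open>Residue map: a v = b v for a, b in O iff v (a - b) > 0.\<close>
definition same_residue :: "('a::field \<Rightarrow> 'g::linorder) \<Rightarrow> 'a \<Rightarrow> 'a \<Rightarrow> bool" where
  "same_residue v a b \<longleftrightarrow> val_gt v (a - b) 1"

definition VD_field :: "('a::field \<Rightarrow> 'g::linordered_ab_group_add) \<Rightarrow> ('a \<Rightarrow> 'a) \<Rightarrow> bool" where
  "VD_field v D \<longleftrightarrow>
     valuation v \<and>
     (\<forall>a b. D (a + b) = D a + D b) \<and>
     (\<forall>a. val_ge v (D a) a) \<and>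
     (v ` {a. a \<noteq> 0} = v ` {a. a \<noteq> 0 \<and> val_gt v (D a) a}) \<and>
     (\<exists>e \<in> val_ring v. \<forall>a b. D (a * b) = a * D b + b * D a + e * D a * D b)"

text \<open>Surjectivity of the induced map on Kv: every residue class b v (b in O)
is of the form D(a v) = (D a) v for some a in O.\<close>
definition residue_D_surj :: "('a::field \<Rightarrow> 'g::linorder) \<Rightarrow> ('a \<Rightarrow> 'a) \<Rightarrow> bool" where
  "residue_D_surj v D \<longleftrightarrow>
     (\<forall>b \<in> val_ring v. \<exists>a \<in> val_ring v. same_residue v (D a) b)"

definition uball :: "('a::field \<Rightarrow> 'g::linorder) \<Rightarrow> 'a \<Rightarrow> 'a \<Rightarrow> 'a set" where
  "uball v a b = {c. val_ge v (a - c) (a - b)}"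

definition spherically_complete :: "('a::field \<Rightarrow> 'g::linorder) \<Rightarrow> bool" where
  "spherically_complete v \<longleftrightarrow>
     (\<forall>N. N \<noteq> {} \<longrightarrow> N \<subseteq> {uball v a b | a b. True} \<longrightarrow>
          (\<forall>X\<in>N. \<forall>Y\<in>N. X \<subseteq> Y \<or> Y \<subseteq> X) \<longrightarrow> \<Inter>N \<noteq> {})"

end

theory Submission
  imports Defs
begin

context
  fixes v :: "'a::field \<Rightarrow> 'g::linordered_ab_group_add"
  assumes val: "valuation v"
begin

lemma vmul: "a \<noteq> 0 \<Longrightarrow> b \<noteq> 0 \<Longrightarrow> v (a * b) = v a + v b"
  using val unfolding valuation_def by blast

lemma vadd: "a \<noteq> 0 \<Longrightarrow> b \<noteq> 0 \<Longrightarrow> a + b \<noteq> 0 \<Longrightarrow> min (v a) (v b) \<le> v (a + b)"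
  using val unfolding valuation_def by blast

lemma v1: "v 1 = 0"
  using vmul[of 1 1] by simp

lemma vm1: "v (-1) = 0"
proof -
  have "v (-1) + v (-1) = 0" using vmul[of "-1" "-1"] v1 by simp
  then show ?thesis
  proof (cases "v (-1)" "0::'g" rule: linorder_cases)
    case less
    then have "v (-1) + v (-1) < 0" using add_neg_neg by blast
    then show ?thesis using \<open>v (-1) + v (-1) = 0\<close> by simp
  next
    case greater
    then have "v (-1) + v (-1) > 0" using add_pos_pos by blast
    then show ?thesis using \<open>v (-1) + v (-1) = 0\<close> by simp
  qed simp
qed

lemma vneg: "x \<noteq> 0 \<Longrightarrow> v (- x) = v x"
  using vmul[of "-1" x] vm1 by simp

lemma ge_refl: "val_ge v a a" unfolding val_ge_def by auto

lemma ge_add: "val_ge v x c \<Longrightarrow> val_ge v y c \<Longrightarrow> val_ge v (x + y) c"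
  unfolding val_ge_def
  using vadd[of x y] by (cases "x = 0"; cases "y = 0"; cases "x + y = 0") (auto, metis min.bounded_iff order_trans)

lemma gt_add: "val_gt v x c \<Longrightarrow> val_gt v y c \<Longrightarrow> val_gt v (x + y) c"
  unfolding val_gt_def
  using vadd[of x y] by (cases "x = 0"; cases "y = 0"; cases "x + y = 0") (auto, metis min_less_iff_conj less_le_trans)

lemma ge_neg: "val_ge v (- a) (- b) = val_ge v a b"
  unfolding val_ge_def using vneg[of a] vneg[of b] by (cases "a = 0") auto

lemma gt_neg: "val_gt v (- a) (- b) = val_gt v a b"
  unfolding val_gt_def using vneg[of a] vneg[of b] by (cases "a = 0") auto

lemma ge_neg1: "val_ge v a b \<Longrightarrow> val_ge v (- a) b"
  unfolding val_ge_def using vneg[of a] by auto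

lemma gt_neg1: "val_gt v a b \<Longrightarrow> val_gt v (- a) b"
  unfolding val_gt_def using vneg[of a] by (cases "a = 0") auto

lemma ge_trans: "val_ge v a b \<Longrightarrow> val_ge v b c \<Longrightarrow> val_ge v a c"
  unfolding val_ge_def by auto

lemma gt_ge_trans: "val_gt v a b \<Longrightarrow> val_ge v b c \<Longrightarrow> val_gt v a c"
  unfolding val_ge_def val_gt_def by auto

lemma ge_gt_trans: "val_ge v a b \<Longrightarrow> val_gt v b c \<Longrightarrow> val_gt v a c"
  unfolding val_ge_def val_gt_def by auto

lemma gt_imp_ge: "val_gt v a b \<Longrightarrow> val_ge v a b"
  unfolding val_ge_def val_gt_def by auto

lemma gt_irrefl: "\<not> val_gt v a a"
  unfolding val_gt_def by auto

lemma M1: "val_gt v s 1 \<Longrightarrow> t \<noteq> 0 \<Longrightarrow> val_gt v (t * s) t"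
  unfolding val_gt_def using vmul[of t s] v1 by (cases "s = 0") (auto simp: add_strict_increasing2)

lemma M2: "val_ge v a 1 \<Longrightarrow> val_gt v d t \<Longrightarrow> val_gt v (a * d) t"
  unfolding val_gt_def val_ge_def using vmul[of a d] v1
  by (cases "a = 0"; cases "d = 0") (auto simp: add_strict_increasing2)

lemma M3: "val_ge v a 1 \<Longrightarrow> val_ge v b 1 \<Longrightarrow> val_ge v (a * b) 1"
  unfolding val_ge_def using vmul[of a b] v1 by (cases "b = 0"; cases "a = 0") auto

lemma M4: "val_ge v a 1 \<Longrightarrow> val_ge v (t * a) t"
  unfolding val_ge_def using vmul[of t a] v1 by auto

end

lemma VD_props:
  assumes "VD_field v D"
  shows "valuation v" "\<And>a b. D (a + b) = D a + D b" "\<And>a. val_ge v (D a) a"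
    "v ` {a. a \<noteq> 0} = v ` {a. a \<noteq> 0 \<and> val_gt v (D a) a}"
    "\<exists>e \<in> val_ring v. \<forall>a b. D (a * b) = a * D b + b * D a + e * D a * D b"
  using assms unfolding VD_field_def by blast+

lemma D_diff:
  fixes D :: "'a::ab_group_add \<Rightarrow> 'a"
  assumes "\<And>a b. D (a + b) = D a + D b"
  shows "D (a - b) = D a - D b"
proof -
  have "D (a - b) + D b = D a" using assms[of "a - b" b] by simp
  then show ?thesis by (simp add: eq_diff_eq)
qed

lemma lemmaL:
  fixes v :: "'a::field \<Rightarrow> 'g::linordered_ab_group_add"
  assumes vd: "VD_field v D" and rs: "residue_D_surj v D" and y: "y \<noteq> 0"
  shows "\<exists>x. val_ge v x y \<and> val_gt v (D x - y) y"
proof -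
  note P = VD_props[OF vd]
  have val: "valuation v" by (rule P(1))
  have "v y \<in> v ` {a. a \<noteq> 0 \<and> val_gt v (D a) a}" using P(4) y by blast
  then obtain t where t: "t \<noteq> 0" "v t = v y" "val_gt v (D t) t" by auto
  obtain e where e: "e \<in> val_ring v" "\<forall>a b. D (a * b) = a * D b + b * D a + e * D a * D b"
    using P(5) by blast
  define w where "w = y / t"
  have w0: "w \<noteq> 0" using y t by (simp add: w_def)
  have tw: "t * w = y" using t by (simp add: w_def)
  have "v y = v t + v w" using vmul[OF val t(1) w0] tw by simp
  then have vw: "v w = 0" using t(2) by simp
  have wO: "w \<in> val_ring v" unfolding val_ring_def val_ge_def using w0 vw v1[OF val] by simp
  obtain a where a: "a \<in> val_ring v" "same_residue v (D a) w"
    using rs wO unfolding residue_D_surj_def by blast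
  have aO: "val_ge v a 1" using a(1) unfolding val_ring_def by simp
  have eO: "val_ge v e 1" using e(1) unfolding val_ring_def by simp
  have g1: "val_gt v (D a - w) 1" using a(2) unfolding same_residue_def by simp
  have ty: "val_ge v t y" unfolding val_ge_def using t y by simp
  define x where "x = t * a"
  have "val_ge v x y" unfolding x_def using ge_trans[OF val M4[OF val aO] ty] .
  moreover have "D x - y = t * (D a - w) + a * D t + (e * D a) * D t"
    unfolding x_def using e(2) tw by (simp add: algebra_simps)
  moreover have "val_gt v (t * (D a - w) + a * D t + (e * D a) * D t) t"
  proof -
    have DaO: "val_ge v (D a) 1" using ge_trans[OF val P(3) aO] .
    show ?thesis
      by (intro gt_add[OF val] M1[OF val g1 t(1)] M2[OF val aO t(3)]
          M2[OF val M3[OF val eO DaO] t(3)])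
  qed
  ultimately show ?thesis using gt_ge_trans[OF val _ ty] by metis
qed

theorem theorem49:
  fixes v :: "'a::field \<Rightarrow> 'g::linordered_ab_group_add" and D :: "'a \<Rightarrow> 'a"
  assumes "VD_field v D"
    and "spherically_complete v"
    and "residue_D_surj v D"
  shows "surj D"
proof (rule ccontr)
  assume "\<not> surj D"
  then obtain b where nb: "\<And>c. D c \<noteq> b" by (metis surjI)
  note P = VD_props[OF assms(1)]
  have val: "valuation v" by (rule P(1))
  have Dd: "\<And>a c. D (a - c) = D a - D c" using D_diff[OF P(2)] .
  have Dn: "\<And>a. D (- a) = - D a" using Dd[of 0] Dd[of 0 0] by simp
  define B where "B c = uball v c (c - D c + b)" for c
  have Bm: "z \<in> B c \<longleftrightarrow> val_ge v (c - z) (D c - b)" for z c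
    unfolding B_def uball_def by simp
  have A: "B z \<subseteq> B c" if "z \<in> B c" for z c
  proof
    fix w assume "w \<in> B z"
    then have h1: "val_ge v (z - w) (D z - b)" by (simp add: Bm)
    have h2: "val_ge v (c - z) (D c - b)" using that by (simp add: Bm)
    have "val_ge v (D (c - z)) (D c - b)" using ge_trans[OF val P(3) h2] .
    then have "val_ge v ((D c - b) + - D (c - z)) (D c - b)"
      by (intro ge_add[OF val] ge_refl[OF val] ge_neg1[OF val])
    moreover have "(D c - b) + - D (c - z) = D z - b" by (simp add: Dd)
    ultimately have h3: "val_ge v (D z - b) (D c - b)" by metis
    have "val_ge v ((c - z) + (z - w)) (D c - b)"
      by (intro ge_add[OF val] h2 ge_trans[OF val h1 h3])
    then show "w \<in> B c" by (simp add: Bm)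
  qed
  have Bstep: "\<exists>c'. B c' \<subseteq> B z \<and> z \<notin> B c'" for z
  proof -
    define y where "y = b - D z"
    have y0: "y \<noteq> 0" using nb[of z] by (simp add: y_def)
    obtain x where x: "val_ge v x y" "val_gt v (D x - y) y"
      using lemmaL[OF assms(1) assms(3) y0] by blast
    define c' where "c' = z + x"
    have "val_ge v (- x) (- y)" using x(1) by (simp add: ge_neg[OF val])
    moreover have "z - c' = - x" "D z - b = - y" by (simp_all add: c'_def y_def)
    ultimately have "c' \<in> B z" by (simp add: Bm)
    moreover have "z \<notin> B c'"
    proof
      assume "z \<in> B c'"
      then have "val_ge v (c' - z) (D c' - b)" by (simp add: Bm)
      moreover have "c' - z = x" "D c' - b = D x - y"
        by (simp_all add: c'_def y_def P(2))
      ultimately have "val_ge v x (D x - y)" by simp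
      then have "val_gt v x y" using ge_gt_trans[OF val _ x(2)] by blast
      then have g: "val_gt v (D x) y" using ge_gt_trans[OF val P(3)] by blast
      have "val_gt v (D x + - (D x - y)) y"
        by (intro gt_add[OF val] g gt_neg1[OF val] x(2))
      then show False using gt_irrefl[OF val] by simp
    qed
    ultimately show ?thesis using A by blast
  qed
  define S where "S = range B"
  obtain M where M: "subset.maxchain S M" using subset.Hausdorff by blast
  have Mc: "M \<subseteq> S" "\<forall>X\<in>M. \<forall>Y\<in>M. X \<subseteq> Y \<or> Y \<subseteq> X"
    using M unfolding subset.maxchain_def subset.chain_def by auto
  have Mne: "M \<noteq> {}"
  proof
    assume "M = {}"
    moreover have "subset.chain S {B 0}" unfolding subset.chain_def S_def by auto
    ultimately show False using M unfolding subset.maxchain_def by blast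
  qed
  have "M \<subseteq> {uball v a b | a b. True}" using Mc(1) unfolding S_def B_def by blast
  then have "\<Inter>M \<noteq> {}" using assms(2) Mne Mc(2) unfolding spherically_complete_def by blast
  then obtain z where z: "z \<in> \<Inter>M" by blast
  obtain c' where c': "B c' \<subseteq> B z" "z \<notin> B c'" using Bstep by blast
  have sub: "\<forall>X\<in>M. B c' \<subseteq> X"
  proof
    fix X assume "X \<in> M"
    then obtain c where "X = B c" using Mc(1) unfolding S_def by blast
    then show "B c' \<subseteq> X" using A z \<open>X \<in> M\<close> c'(1) by blast
  qed
  have "subset.chain S (insert (B c') M)"
    using Mc sub unfolding subset.chain_def S_def by auto
  moreover have "B c' \<notin> M" using z c'(2) by blast
  ultimately show False using M unfolding subset.maxchain_def by blast
qed

end
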